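(* A $\mathbb{B}$-topological space $(X,\tau)$ is $R_1$ if and only if both topological spaces $(X,\tau[tt])$ and $(X,\tau[ff])$ are $R_1$. Consequently, $(X,\tau)$ is Hausdorff if and only if $(X,\tau[tt])$ and $(X,\tau[ff])$ are $R_1$ and the topological space $(X,\tau[tt]\vee\tau[ff])$ is $T_0$.
   Context: $\mathbb{B}=\{0,1,tt,ff\}$ is the four-element Boolean algebra with bottom $0$, top $1$, and $tt,ff$ incomparable complements; $\neg$ its complement, $a\to b=\neg a\vee b$. A $\mathbb{B}$-topology on $X$ is $\tau\subseteq\mathbb{B}^X$ containing all constant maps and closed under arbitrary pointwise joins and finite pointwise meets; $\mu\in\mathbb{B}^X$ is closed if $\neg\mu\in\tau$. $\tau[b]=\{\lambda[b]:\lambda\in\tau\}$, $\lambda[b]=\{x:\lambda(x)\ge b\}$; $\tau[tt]\vee\tau[ff]$ is the topology generated by their union. Specialization $\mathbb{B}$-order: $\Omega(\tau)(x,y)=\bigwedge_{\lambda\in\tau}(\lambda(x)\to\lambda(y))$. The product $(X,\tau)\times(X,\tau)$ is $X\times X$ with the $\mathbb{B}$-topology generated by the constants and $\{\lambda\circ\pi_1,\lambda\circ\pi_2:\lambda\in\tau\}$. $(X,\tau)$ is $R_1$ if $\Omega(\tau)\colon X\times X\to\mathbb{B}$ is a closed set of $(X,\tau)\times(X,\tau)$; $T_0$ if $\Omega(\tau)(x,y)=1=\Omega(\tau)(y,x)$ implies $x=y$; Hausdorff if $T_0$ and $R_1$. A topological space is $R_1$ if any two points with distinct closures of singletons have disjoint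 neighbourhoods. *)

theory Defs
  imports "HOL-Analysis.Analysis" "HOL-Library.Product_Order"
begin

text \<open>The four-element Boolean algebra B = {0,1,tt,ff} is rendered as bool \<times> bool with the
componentwise (product) order: 0 = (False,False) = bot, 1 = (True,True) = top,
tt = (True,False), ff = (False,True). A B-topological space (X,tau) is modelled with X the
whole (arbitrary) type 'a.\<close>

type_synonym B4 = "bool \<times> bool"

definition tt :: B4 where "tt = (True, False)"
definition ff :: B4 where "ff = (False, True)"

definition Bimp :: "B4 \<Rightarrow> B4 \<Rightarrow> B4" where
  "Bimp a b = sup (- a) b"

definition is_Btop :: "('a \<Rightarrow> B4) set \<Rightarrow> bool" where
  "is_Btop T \<longleftrightarrow> (\<forall>c. (\<lambda>_. c) \<in> T) \<and> (\<forall>S. S \<subseteq> T \<longrightarrow> Sup S \<in> T)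
      \<and> (\<forall>l\<in>T. \<forall>m\<in>T. inf l m \<in> T)"

definition Bclosed :: "('a \<Rightarrow> B4) set \<Rightarrow> ('a \<Rightarrow> B4) \<Rightarrow> bool" where
  "Bclosed T m \<longleftrightarrow> (- m) \<in> T"

definition Btop_generated :: "('a \<Rightarrow> B4) set \<Rightarrow> ('a \<Rightarrow> B4) set" where
  "Btop_generated S = \<Inter>{T. is_Btop T \<and> S \<subseteq> T}"

definition level :: "('a \<Rightarrow> B4) \<Rightarrow> B4 \<Rightarrow> 'a set" where
  "level l b = {x. b \<le> l x}"

definition level_top :: "('a \<Rightarrow> B4) set \<Rightarrow> B4 \<Rightarrow> 'a topology" where
  "level_top T b = topology (\<lambda>U. U \<in> (\<lambda>l. level l b) ` T)"

definition join_top :: "'a topology \<Rightarrow> 'a topology \<Rightarrow> 'a topology" where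
  "join_top X Y = topology_generated_by ({U. openin X U} \<union> {U. openin Y U})"

definition Omega :: "('a \<Rightarrow> B4) set \<Rightarrow> 'a \<Rightarrow> 'a \<Rightarrow> B4" where
  "Omega T x y = (INF l\<in>T. Bimp (l x) (l y))"

definition Bprod :: "('a \<Rightarrow> B4) set \<Rightarrow> ('a \<times> 'a \<Rightarrow> B4) set" where
  "Bprod T = Btop_generated (range (\<lambda>c. (\<lambda>_. c)) \<union> (\<lambda>l. l \<circ> fst) ` T \<union> (\<lambda>l. l \<circ> snd) ` T)"

definition B_R1 :: "('a \<Rightarrow> B4) set \<Rightarrow> bool" where
  "B_R1 T \<longleftrightarrow> Bclosed (Bprod T) (\<lambda>(x, y). Omega T x y)"

definition B_T0 :: "('a \<Rightarrow> B4) set \<Rightarrow> bool" where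
  "B_T0 T \<longleftrightarrow> (\<forall>x y. Omega T x y = top \<and> Omega T y x = top \<longrightarrow> x = y)"

definition B_Hausdorff :: "('a \<Rightarrow> B4) set \<Rightarrow> bool" where
  "B_Hausdorff T \<longleftrightarrow> B_T0 T \<and> B_R1 T"

definition R1_space :: "'a topology \<Rightarrow> bool" where
  "R1_space X \<longleftrightarrow> (\<forall>x\<in>topspace X. \<forall>y\<in>topspace X.
      X closure_of {x} \<noteq> X closure_of {y} \<longrightarrow>
      (\<exists>U V. openin X U \<and> openin X V \<and> x \<in> U \<and> y \<in> V \<and> disjnt U V))"

end

theory Submission imports Defs begin

definition lt :: "('a \<Rightarrow> B4) set \<Rightarrow> (B4 \<Rightarrow> bool) \<Rightarrow> 'a topology" where
  "lt T p = topology (\<lambda>U. \<exists>l\<in>T. U = {x. p (l x)})"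

definition isproj :: "(B4 \<Rightarrow> bool) \<Rightarrow> bool" where
  "isproj p \<longleftrightarrow> p = fst \<or> p = snd"

lemma proj_Sup: "isproj p \<Longrightarrow> p (Sup S) \<longleftrightarrow> (\<exists>s\<in>S. p s)"
  unfolding isproj_def by (auto simp: fst_Sup snd_Sup; metis fst_conv snd_conv)
lemma proj_Inf: "isproj p \<Longrightarrow> p (Inf S) \<longleftrightarrow> (\<forall>s\<in>S. p s)"
  unfolding isproj_def by (auto simp: fst_Inf snd_Inf; metis fst_conv snd_conv)
lemma proj_inf: "isproj p \<Longrightarrow> p (inf a b) \<longleftrightarrow> p a \<and> p b"
  unfolding isproj_def by auto
lemma proj_sup: "isproj p \<Longrightarrow> p (sup a b) \<longleftrightarrow> p a \<or> p b"
  unfolding isproj_def by auto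
lemma proj_uminus: "isproj p \<Longrightarrow> p (- a) \<longleftrightarrow> \<not> p a"
  unfolding isproj_def by (auto simp: uminus_prod_def)
lemma proj_top: "isproj p \<Longrightarrow> p top"
  unfolding isproj_def by auto
lemma proj_bot: "isproj p \<Longrightarrow> \<not> p bot"
  unfolding isproj_def by auto

lemma Btop_Sup: "is_Btop T \<Longrightarrow> S \<subseteq> T \<Longrightarrow> Sup S \<in> T" unfolding is_Btop_def by blast
lemma Btop_inf: "is_Btop T \<Longrightarrow> l \<in> T \<Longrightarrow> m \<in> T \<Longrightarrow> inf l m \<in> T" unfolding is_Btop_def by blast
lemma Btop_const: "is_Btop T \<Longrightarrow> (\<lambda>_. c) \<in> T" unfolding is_Btop_def by blast

lemma istop_lt: assumes "is_Btop T" "isproj p"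
  shows "istopology (\<lambda>U. \<exists>l\<in>T. U = {x. p (l x)})"
  unfolding istopology_def
proof (intro conjI allI impI ballI)
  fix U V assume "\<exists>l\<in>T. U = {x. p (l x)}" "\<exists>l\<in>T. V = {x. p (l x)}"
  then obtain l m where lm: "l \<in> T" "m \<in> T" "U = {x. p (l x)}" "V = {x. p (m x)}" by blast
  have "inf l m \<in> T" using Btop_inf[OF assms(1) lm(1,2)] .
  moreover have "U \<inter> V = {x. p (inf l m x)}" using lm(3,4) proj_inf[OF assms(2)] by auto
  ultimately show "\<exists>l\<in>T. U \<inter> V = {x. p (l x)}" by blast
next
  fix K assume K: "\<forall>U\<in>K. \<exists>l\<in>T. U = {x. p (l x)}"
  define S where "S = {l\<in>T. {x. p (l x)} \<subseteq> \<Union>K}"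
  have "S \<subseteq> T" unfolding S_def by blast
  then have "Sup S \<in> T" using assms(1) by (rule Btop_Sup[rotated])
  moreover have "\<Union>K = {x. p (Sup S x)}"
  proof (rule set_eqI)
    fix x
    have e: "p (Sup S x) \<longleftrightarrow> (\<exists>l\<in>S. p (l x))"
      using assms(2) by (simp add: proj_Sup)
    show "x \<in> \<Union>K \<longleftrightarrow> x \<in> {x. p (Sup S x)}"
    proof
      assume "x \<in> \<Union>K"
      then obtain U where U: "U \<in> K" "x \<in> U" by blast
      then obtain l where l: "l \<in> T" "U = {x. p (l x)}" using K by blast
      have "l \<in> S" unfolding S_def using l U(1) by blast
      moreover have "p (l x)" using l(2) U(2) by simp
      ultimately show "x \<in> {x. p (Sup S x)}" using e by auto
    next
      assume "x \<in> {x. p (Sup S x)}"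
      then obtain l where "l \<in> S" "p (l x)" using e by auto
      then show "x \<in> \<Union>K" unfolding S_def by blast
    qed
  qed
  ultimately show "\<exists>l\<in>T. \<Union>K = {x. p (l x)}" by blast
qed

lemma openin_lt: "is_Btop T \<Longrightarrow> isproj p \<Longrightarrow> openin (lt T p) U \<longleftrightarrow> (\<exists>l\<in>T. U = {x. p (l x)})"
  unfolding lt_def by (drule (1) istop_lt) (simp add: topology_inverse')

lemma topspace_lt: assumes a: "is_Btop T" "isproj p" shows "topspace (lt T p) = UNIV"
proof -
  have "\<exists>l\<in>T. (UNIV::'a set) = {x. p (l x)}"
  proof (rule bexI[where x="\<lambda>_. top"])
    show "UNIV = {x. p ((\<lambda>_. top) x)}" by (simp add: proj_top a(2))
    show "(\<lambda>_. top) \<in> T" by (rule Btop_const[OF a(1)])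
  qed
  then have "openin (lt T p) UNIV" unfolding openin_lt[OF a] .
  then show ?thesis using openin_subset by blast
qed

lemma tt_le: "tt \<le> y \<longleftrightarrow> fst y" by (cases y) (simp add: tt_def)
lemma ff_le: "ff \<le> y \<longleftrightarrow> snd y" by (cases y) (simp add: ff_def)
lemma level_tt: "level_top T tt = lt T fst"
  unfolding level_top_def lt_def level_def tt_le image_def mem_Collect_eq ..
lemma level_ff: "level_top T ff = lt T snd"
  unfolding level_top_def lt_def level_def ff_le image_def mem_Collect_eq ..

definition sp :: "('a \<Rightarrow> B4) set \<Rightarrow> (B4 \<Rightarrow> bool) \<Rightarrow> 'a \<Rightarrow> 'a \<Rightarrow> bool" where
  "sp T p x y \<longleftrightarrow> (\<forall>l\<in>T. p (l x) \<longrightarrow> p (l y))"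

definition boxopen :: "('a \<Rightarrow> B4) set \<Rightarrow> (B4 \<Rightarrow> bool) \<Rightarrow> ('a \<times> 'a) set \<Rightarrow> bool" where
  "boxopen T p W \<longleftrightarrow> (\<forall>a b. (a,b) \<in> W \<longrightarrow> (\<exists>l\<in>T. \<exists>m\<in>T. p (l a) \<and> p (m b) \<and>
      (\<forall>a' b'. p (l a') \<and> p (m b') \<longrightarrow> (a',b') \<in> W)))"

lemma in_closure_lt: assumes a: "is_Btop T" "isproj p"
  shows "x \<in> lt T p closure_of {y} \<longleftrightarrow> sp T p x y"
proof
  assume h: "x \<in> lt T p closure_of {y}"
  have h2: "\<forall>U. x \<in> U \<and> openin (lt T p) U \<longrightarrow> (\<exists>z. z \<in> {y} \<and> z \<in> U)"
    using h unfolding in_closure_of by (rule conjunct2)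
  show "sp T p x y" unfolding sp_def
  proof (intro ballI impI)
    fix l assume l: "l \<in> T" "p (l x)"
    have "openin (lt T p) {x. p (l x)}" unfolding openin_lt[OF a] using l(1) by blast
    then have "x \<in> {x. p (l x)} \<and> openin (lt T p) {x. p (l x)}" using l(2) by simp
    then have "\<exists>z. z \<in> {y} \<and> z \<in> {x. p (l x)}" by (rule mp[OF spec[OF h2]])
    then show "p (l y)" by simp
  qed
next
  assume h: "sp T p x y"
  have "\<forall>U. x \<in> U \<and> openin (lt T p) U \<longrightarrow> (\<exists>z. z \<in> {y} \<and> z \<in> U)"
  proof (intro allI impI)
    fix U assume hU: "x \<in> U \<and> openin (lt T p) U"
    obtain l where "l \<in> T" "U = {x. p (l x)}" using hU unfolding openin_lt[OF a] by blast
    then show "\<exists>z. z \<in> {y} \<and> z \<in> U" using h hU unfolding sp_def by auto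
  qed
  then show "x \<in> lt T p closure_of {y}" unfolding in_closure_of topspace_lt[OF a] by simp
qed

lemma closure_eq_lt: assumes "is_Btop T" "isproj p"
  shows "lt T p closure_of {x} = lt T p closure_of {y} \<longleftrightarrow> sp T p x y \<and> sp T p y x"
proof
  assume e: "lt T p closure_of {x} = lt T p closure_of {y}"
  have "sp T p x x" "sp T p y y" unfolding sp_def by auto
  then have "x \<in> lt T p closure_of {x}" "y \<in> lt T p closure_of {y}"
    unfolding in_closure_lt[OF assms] .
  then have "x \<in> lt T p closure_of {y}" "y \<in> lt T p closure_of {x}" using e by simp_all
  then show "sp T p x y \<and> sp T p y x" unfolding in_closure_lt[OF assms] by simp
next
  assume h: "sp T p x y \<and> sp T p y x"
  show "lt T p closure_of {x} = lt T p closure_of {y}"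
  proof (rule set_eqI)
    fix z
    have "sp T p z x \<longleftrightarrow> sp T p z y" using h unfolding sp_def by blast
    then show "z \<in> lt T p closure_of {x} \<longleftrightarrow> z \<in> lt T p closure_of {y}"
      unfolding in_closure_lt[OF assms] .
  qed
qed

lemma R1_iff: assumes T: "is_Btop T" and p: "isproj p"
  shows "R1_space (lt T p) \<longleftrightarrow> boxopen T p {q. \<not> sp T p (fst q) (snd q)}"
proof
  assume R: "R1_space (lt T p)"
  show "boxopen T p {q. \<not> sp T p (fst q) (snd q)}"
    unfolding boxopen_def
  proof (intro allI impI)
    fix a b assume "(a,b) \<in> {q. \<not> sp T p (fst q) (snd q)}"
    then have nab: "\<not> sp T p a b" by simp
    then have "lt T p closure_of {a} \<noteq> lt T p closure_of {b}"
      using closure_eq_lt[OF T p, of a b] by simp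
    moreover have "a \<in> topspace (lt T p)" "b \<in> topspace (lt T p)" using topspace_lt[OF T p] by auto
    ultimately have "\<exists>U V. openin (lt T p) U \<and> openin (lt T p) V \<and> a \<in> U \<and> b \<in> V \<and> disjnt U V"
      using R unfolding R1_space_def by blast
    then obtain U V where UV: "openin (lt T p) U" "openin (lt T p) V" "a \<in> U" "b \<in> V" "disjnt U V"
      by blast
    obtain l where l: "l \<in> T" "U = {x. p (l x)}" using UV(1) openin_lt[OF T p] by blast
    obtain m where m: "m \<in> T" "V = {x. p (m x)}" using UV(2) openin_lt[OF T p] by blast
    have 1: "p (l a)" using UV(3) l(2) by simp
    have 2: "p (m b)" using UV(4) m(2) by simp
    have 3: "(a',b') \<in> {q. \<not> sp T p (fst q) (snd q)}" if h: "p (l a')" "p (m b')" for a' b'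
    proof -
      have "\<not> p (l b')" using UV(5) l(2) m(2) h(2) unfolding disjnt_def by blast
      then have "\<not> sp T p a' b'" using l(1) h(1) unfolding sp_def by blast
      then show ?thesis by simp
    qed
    show "\<exists>l\<in>T. \<exists>m\<in>T. p (l a) \<and> p (m b) \<and>
      (\<forall>a' b'. p (l a') \<and> p (m b') \<longrightarrow> (a',b') \<in> {q. \<not> sp T p (fst q) (snd q)})"
      using l(1) m(1) 1 2 3 by blast
  qed
next
  assume B: "boxopen T p {q. \<not> sp T p (fst q) (snd q)}"
  have sep: "\<exists>U V. openin (lt T p) U \<and> openin (lt T p) V \<and> x \<in> U \<and> y \<in> V \<and> disjnt U V"
    if "\<not> sp T p x y" for x y
  proof -
    have "(x,y) \<in> {q. \<not> sp T p (fst q) (snd q)}" using that by simp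
    then have "\<exists>l\<in>T. \<exists>m\<in>T. p (l x) \<and> p (m y) \<and>
      (\<forall>a' b'. p (l a') \<and> p (m b') \<longrightarrow> (a',b') \<in> {q. \<not> sp T p (fst q) (snd q)})"
      using B unfolding boxopen_def by blast
    then obtain l m where lm: "l \<in> T" "m \<in> T" "p (l x)" "p (m y)"
        "\<forall>a' b'. p (l a') \<and> p (m b') \<longrightarrow> \<not> sp T p a' b'" by auto
    have o1: "openin (lt T p) {x. p (l x)}" using openin_lt[OF T p] lm(1) by blast
    have o2: "openin (lt T p) {x. p (m x)}" using openin_lt[OF T p] lm(2) by blast
    have d: "disjnt {x. p (l x)} {x. p (m x)}"
      unfolding disjnt_def using lm(5) by (auto simp: sp_def)
    show ?thesis using o1 o2 d lm(3,4) by blast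
  qed
  show "R1_space (lt T p)" unfolding R1_space_def
  proof (intro ballI impI)
    fix x y assume "lt T p closure_of {x} \<noteq> lt T p closure_of {y}"
    then have "\<not> sp T p x y \<or> \<not> sp T p y x" using closure_eq_lt[OF T p, of x y] by simp
    then show "\<exists>U V. openin (lt T p) U \<and> openin (lt T p) V \<and> x \<in> U \<and> y \<in> V \<and> disjnt U V"
    proof
      assume "\<not> sp T p x y" then show ?thesis using sep by blast
    next
      assume "\<not> sp T p y x"
      then obtain U V where "openin (lt T p) U" "openin (lt T p) V" "y \<in> U" "x \<in> V" "disjnt U V"
        using sep by blast
      then show ?thesis by (meson disjnt_sym)
    qed
  qed
qed


lemma bo_iff: "boxopen T p {q. P q} \<longleftrightarrow> (\<forall>a b. P (a,b) \<longrightarrow> (\<exists>l\<in>T. \<exists>m\<in>T. p (l a) \<and> p (m b) \<and>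
      (\<forall>a' b'. p (l a') \<and> p (m b') \<longrightarrow> P (a',b'))))"
  unfolding boxopen_def by simp

lemma Sup_fun_proj: "isproj p \<Longrightarrow> p (Sup X q) \<longleftrightarrow> (\<exists>f\<in>X. p (f q))"
  by (simp add: proj_Sup)

lemma bo_const: assumes T: "is_Btop T" and p: "isproj p" shows "boxopen T p {q. p c}"
  unfolding bo_iff
proof (intro allI impI)
  fix a b :: 'a assume c: "p c"
  have "(\<lambda>_. top) \<in> T" by (rule Btop_const[OF T])
  then show "\<exists>l\<in>T. \<exists>m\<in>T. p (l a) \<and> p (m b) \<and> (\<forall>a' b'. p (l a') \<and> p (m b') \<longrightarrow> p c)"
    using c by (intro bexI[of _ "\<lambda>_. top"]) (simp_all add: proj_top[OF p])
qed

lemma bo_fst: assumes T: "is_Btop T" and p: "isproj p" and l: "l \<in> T"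
  shows "boxopen T p {q. p ((l \<circ> fst) q)}"
  unfolding bo_iff
proof (intro allI impI)
  fix a b :: 'a assume c: "p ((l \<circ> fst) (a, b))"
  have "(\<lambda>_. top) \<in> T" by (rule Btop_const[OF T])
  then show "\<exists>l'\<in>T. \<exists>m\<in>T. p (l' a) \<and> p (m b) \<and> (\<forall>a' b'. p (l' a') \<and> p (m b') \<longrightarrow> p ((l \<circ> fst) (a', b')))"
    using l c by (intro bexI[of _ l] bexI[of _ "\<lambda>_. top"]) (simp_all add: proj_top[OF p])
qed

lemma bo_snd: assumes T: "is_Btop T" and p: "isproj p" and l: "l \<in> T"
  shows "boxopen T p {q. p ((l \<circ> snd) q)}"
  unfolding bo_iff
proof (intro allI impI)
  fix a b :: 'a assume c: "p ((l \<circ> snd) (a, b))"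
  have "(\<lambda>_. top) \<in> T" by (rule Btop_const[OF T])
  then show "\<exists>l'\<in>T. \<exists>m\<in>T. p (l' a) \<and> p (m b) \<and> (\<forall>a' b'. p (l' a') \<and> p (m b') \<longrightarrow> p ((l \<circ> snd) (a', b')))"
    using l c by (intro bexI[of _ "\<lambda>_. top"] bexI[of _ l]) (simp_all add: proj_top[OF p])
qed

lemma bo_inf: assumes T: "is_Btop T" and p: "isproj p"
  and h1: "boxopen T p {q. p (f q)}" and h2: "boxopen T p {q. p (g q)}"
  shows "boxopen T p {q. p (inf f g q)}"
  unfolding bo_iff
proof (intro allI impI)
  fix a b :: 'a assume c: "p (inf f g (a, b))"
  then have c1: "p (f (a,b))" and c2: "p (g (a,b))" by (simp_all add: proj_inf[OF p])
  have "\<exists>l\<in>T. \<exists>m\<in>T. p (l a) \<and> p (m b) \<and> (\<forall>a' b'. p (l a') \<and> p (m b') \<longrightarrow> p (f (a',b')))"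
    using h1[unfolded bo_iff, rule_format, OF c1] .
  then obtain l1 m1 where 1: "l1 \<in> T" "m1 \<in> T" "p (l1 a)" "p (m1 b)" "\<forall>a' b'. p (l1 a') \<and> p (m1 b') \<longrightarrow> p (f (a',b'))"
    by blast
  have "\<exists>l\<in>T. \<exists>m\<in>T. p (l a) \<and> p (m b) \<and> (\<forall>a' b'. p (l a') \<and> p (m b') \<longrightarrow> p (g (a',b')))"
    using h2[unfolded bo_iff, rule_format, OF c2] .
  then obtain l2 m2 where 2: "l2 \<in> T" "m2 \<in> T" "p (l2 a)" "p (m2 b)" "\<forall>a' b'. p (l2 a') \<and> p (m2 b') \<longrightarrow> p (g (a',b'))"
    by blast
  have i1: "inf l1 l2 \<in> T" using Btop_inf[OF T 1(1) 2(1)] .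
  have i2: "inf m1 m2 \<in> T" using Btop_inf[OF T 1(2) 2(2)] .
  have "p (inf l1 l2 a) \<and> p (inf m1 m2 b) \<and> (\<forall>a' b'. p (inf l1 l2 a') \<and> p (inf m1 m2 b') \<longrightarrow> p (inf f g (a',b')))"
    using 1 2 by (simp add: proj_inf[OF p])
  then show "\<exists>l\<in>T. \<exists>m\<in>T. p (l a) \<and> p (m b) \<and> (\<forall>a' b'. p (l a') \<and> p (m b') \<longrightarrow> p (inf f g (a', b')))"
    using i1 i2 by (intro bexI[of _ "inf l1 l2"] bexI[of _ "inf m1 m2"])
qed

lemma bo_Sup: assumes T: "is_Btop T" and p: "isproj p"
  and h: "\<forall>f\<in>X. boxopen T p {q. p (f q)}"
  shows "boxopen T p {q. p (Sup X q)}"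
  unfolding bo_iff
proof (intro allI impI)
  fix a b :: 'a assume c: "p (Sup X (a, b))"
  then obtain f where f: "f \<in> X" "p (f (a,b))" unfolding Sup_fun_proj[OF p] by blast
  have hf: "boxopen T p {q. p (f q)}" using h f(1) by blast
  have "\<exists>l\<in>T. \<exists>m\<in>T. p (l a) \<and> p (m b) \<and> (\<forall>a' b'. p (l a') \<and> p (m b') \<longrightarrow> p (f (a',b')))"
    using hf[unfolded bo_iff, rule_format, OF f(2)] .
  then obtain l m where 1: "l \<in> T" "m \<in> T" "p (l a)" "p (m b)" "\<forall>a' b'. p (l a') \<and> p (m b') \<longrightarrow> p (f (a',b'))"
    by blast
  have "p (f q) \<Longrightarrow> p (Sup X q)" for q unfolding Sup_fun_proj[OF p] using f(1) by blast
  then have H: "\<forall>a' b'. p (l a') \<and> p (m b') \<longrightarrow> p (Sup X (a',b'))"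
    using 1(5) by blast
  show "\<exists>l\<in>T. \<exists>m\<in>T. p (l a) \<and> p (m b) \<and> (\<forall>a' b'. p (l a') \<and> p (m b') \<longrightarrow> p (Sup X (a', b')))"
    apply (rule bexI[of _ l], rule bexI[of _ m]) using 1 H by auto
qed

lemma Bprod_to_bo: assumes T: "is_Btop T" and mu: "\<mu> \<in> Bprod T" and p: "isproj p"
  shows "boxopen T p {q. p (\<mu> q)}"
proof -
  define G where "G = {f. \<forall>p. isproj p \<longrightarrow> boxopen T p {q. p (f q)}}"
  have "is_Btop G" unfolding is_Btop_def
  proof (intro conjI allI impI ballI)
    fix c :: B4 show "(\<lambda>_. c) \<in> G" unfolding G_def using bo_const[OF T] by simp
  next
    fix X assume "X \<subseteq> G" then show "Sup X \<in> G" unfolding G_def using bo_Sup[OF T] by blast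
  next
    fix f g assume "f \<in> G" "g \<in> G" then show "inf f g \<in> G" unfolding G_def using bo_inf[OF T] by blast
  qed
  moreover have "range (\<lambda>c. (\<lambda>_. c)) \<union> (\<lambda>l. l \<circ> fst) ` T \<union> (\<lambda>l. l \<circ> snd) ` T \<subseteq> G"
    unfolding G_def using bo_const[OF T] bo_fst[OF T] bo_snd[OF T] by auto
  ultimately have "Bprod T \<subseteq> G" unfolding Bprod_def Btop_generated_def by blast
  then show ?thesis using mu p unfolding G_def by blast
qed


lemma isproj_fst: "isproj fst" by (simp add: isproj_def)
lemma isproj_snd: "isproj snd" by (simp add: isproj_def)

lemma bo_to_Bprod: assumes T: "is_Btop T"
  and h1: "boxopen T fst {q. fst (\<mu> q)}" and h2: "boxopen T snd {q. snd (\<mu> q)}"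
  shows "\<mu> \<in> Bprod T"
proof -
  define A where "A p c = {f. \<exists>l\<in>T. \<exists>m\<in>T. (\<forall>a b. p (l a) \<and> p (m b) \<longrightarrow> p (\<mu> (a,b)))
      \<and> f = inf (inf (l \<circ> fst) (m \<circ> snd)) (\<lambda>_. c)}" for p :: "B4 \<Rightarrow> bool" and c :: B4
  let ?S = "Sup (A fst tt \<union> A snd ff)"
  have eq: "\<mu> = ?S"
  proof (rule ext)
    fix q :: "'a \<times> 'a"
    obtain a b where q: "q = (a,b)" by (cases q)
    have f1: "fst (?S q) \<longleftrightarrow> fst (\<mu> q)"
    proof
      assume "fst (?S q)"
      then obtain f where f: "f \<in> A fst tt \<union> A snd ff" "fst (f q)"
        unfolding Sup_fun_proj[OF isproj_fst] by blast
      show "fst (\<mu> q)"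
      proof (cases "f \<in> A fst tt")
        case True
        then obtain l m where lm: "\<forall>a b. fst (l a) \<and> fst (m b) \<longrightarrow> fst (\<mu> (a,b))"
          "f = inf (inf (l \<circ> fst) (m \<circ> snd)) (\<lambda>_. tt)" unfolding A_def by blast
        then have "fst (l a) \<and> fst (m b)" using f(2) q by (simp add: tt_def)
        then show ?thesis using lm(1) q by simp
      next
        case False
        then obtain l m where "f = inf (inf (l \<circ> fst) (m \<circ> snd)) (\<lambda>_. ff)"
          using f(1) unfolding A_def by blast
        then have False using f(2) by (simp add: ff_def)
        then show ?thesis ..
      qed
    next
      assume "fst (\<mu> q)"
      then have "fst (\<mu> (a,b))" using q by simp
      from h1[unfolded bo_iff, rule_format, OF this]
      obtain l m where lm: "l \<in> T" "m \<in> T" "fst (l a)" "fst (m b)"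
        "\<forall>a' b'. fst (l a') \<and> fst (m b') \<longrightarrow> fst (\<mu> (a',b'))" by blast
      have "inf (inf (l \<circ> fst) (m \<circ> snd)) (\<lambda>_. tt) \<in> A fst tt"
        unfolding A_def using lm(1,2,5) by blast
      moreover have "fst (inf (inf (l \<circ> fst) (m \<circ> snd)) (\<lambda>_. tt) q)"
        using lm(3,4) q by (simp add: tt_def)
      ultimately show "fst (?S q)" unfolding Sup_fun_proj[OF isproj_fst] by blast
    qed
    have f2: "snd (?S q) \<longleftrightarrow> snd (\<mu> q)"
    proof
      assume "snd (?S q)"
      then obtain f where f: "f \<in> A fst tt \<union> A snd ff" "snd (f q)"
        unfolding Sup_fun_proj[OF isproj_snd] by blast
      show "snd (\<mu> q)"
      proof (cases "f \<in> A snd ff")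
        case True
        then obtain l m where lm: "\<forall>a b. snd (l a) \<and> snd (m b) \<longrightarrow> snd (\<mu> (a,b))"
          "f = inf (inf (l \<circ> fst) (m \<circ> snd)) (\<lambda>_. ff)" unfolding A_def by blast
        then have "snd (l a) \<and> snd (m b)" using f(2) q by (simp add: ff_def)
        then show ?thesis using lm(1) q by simp
      next
        case False
        then obtain l m where "f = inf (inf (l \<circ> fst) (m \<circ> snd)) (\<lambda>_. tt)"
          using f(1) unfolding A_def by blast
        then have False using f(2) by (simp add: tt_def)
        then show ?thesis ..
      qed
    next
      assume "snd (\<mu> q)"
      then have "snd (\<mu> (a,b))" using q by simp
      from h2[unfolded bo_iff, rule_format, OF this]
      obtain l m where lm: "l \<in> T" "m \<in> T" "snd (l a)" "snd (m b)"
        "\<forall>a' b'. snd (l a') \<and> snd (m b') \<longrightarrow> snd (\<mu> (a',b'))" by blast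
      have "inf (inf (l \<circ> fst) (m \<circ> snd)) (\<lambda>_. ff) \<in> A snd ff"
        unfolding A_def using lm(1,2,5) by blast
      moreover have "snd (inf (inf (l \<circ> fst) (m \<circ> snd)) (\<lambda>_. ff) q)"
        using lm(3,4) q by (simp add: ff_def)
      ultimately show "snd (?S q)" unfolding Sup_fun_proj[OF isproj_snd] by blast
    qed
    show "\<mu> q = ?S q" using f1 f2 by (simp add: prod_eq_iff)
  qed
  show ?thesis
    unfolding Bprod_def Btop_generated_def
  proof (rule InterI)
    fix T' assume "T' \<in> {T'. is_Btop T' \<and> range (\<lambda>c. (\<lambda>_. c)) \<union> (\<lambda>l. l \<circ> fst) ` T \<union> (\<lambda>l. l \<circ> snd) ` T \<subseteq> T'}"
    then have T': "is_Btop T'" and gen: "range (\<lambda>c. (\<lambda>_. c)) \<union> (\<lambda>l. l \<circ> fst) ` T \<union> (\<lambda>l. l \<circ> snd) ` T \<subseteq> T'"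
      by auto
    have sub: "A p c \<subseteq> T'" for p c
    proof
      fix f assume "f \<in> A p c"
      then obtain l m where lm: "l \<in> T" "m \<in> T" "f = inf (inf (l \<circ> fst) (m \<circ> snd)) (\<lambda>_. c)"
        unfolding A_def by blast
      have "l \<circ> fst \<in> T'" "m \<circ> snd \<in> T'" "(\<lambda>_. c) \<in> T'" using gen lm(1,2) by auto
      then show "f \<in> T'" unfolding lm(3) by (intro Btop_inf[OF T']) 
    qed
    have "?S \<in> T'" using sub by (intro Btop_Sup[OF T']) blast
    then show "\<mu> \<in> T'" using eq by simp
  qed
qed


lemma proj_Omega: "isproj p \<Longrightarrow> p (Omega T x y) \<longleftrightarrow> sp T p x y"
  unfolding Omega_def sp_def Bimp_def by (simp add: proj_Inf proj_sup proj_uminus)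

lemma R1_char: assumes T: "is_Btop T"
  shows "B_R1 T \<longleftrightarrow> R1_space (lt T fst) \<and> R1_space (lt T snd)"
proof -
  define \<nu> where "\<nu> = - (\<lambda>(x, y). Omega T x y)"
  have e: "{q. p (\<nu> q)} = {q. \<not> sp T p (fst q) (snd q)}" if p: "isproj p" for p
  proof -
    have "p (\<nu> q) \<longleftrightarrow> \<not> sp T p (fst q) (snd q)" for q
      unfolding \<nu>_def by (cases q) (simp add: proj_uminus[OF p] proj_Omega[OF p])
    then show ?thesis by simp
  qed
  have "B_R1 T \<longleftrightarrow> \<nu> \<in> Bprod T" unfolding B_R1_def Bclosed_def \<nu>_def ..
  also have "\<dots> \<longleftrightarrow> boxopen T fst {q. fst (\<nu> q)} \<and> boxopen T snd {q. snd (\<nu> q)}"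
    using Bprod_to_bo[OF T _ isproj_fst] Bprod_to_bo[OF T _ isproj_snd] bo_to_Bprod[OF T] by blast
  also have "\<dots> \<longleftrightarrow> R1_space (lt T fst) \<and> R1_space (lt T snd)"
    unfolding e[OF isproj_fst] e[OF isproj_snd] R1_iff[OF T isproj_fst] R1_iff[OF T isproj_snd] ..
  finally show ?thesis .
qed

lemma top_iff: "(b::B4) = top \<longleftrightarrow> fst b \<and> snd b" by (cases b) (simp add: top_prod_def)

lemma T0_char: assumes T: "is_Btop T"
  shows "B_T0 T \<longleftrightarrow> (\<forall>x y. sp T fst x y \<and> sp T snd x y \<and> sp T fst y x \<and> sp T snd y x \<longrightarrow> x = y)"
  unfolding B_T0_def top_iff proj_Omega[OF isproj_fst] proj_Omega[OF isproj_snd] by blast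

lemma gen_sep: "generate_topology_on S U \<Longrightarrow> (\<forall>V\<in>S. x \<in> V \<longleftrightarrow> y \<in> V) \<Longrightarrow> (x \<in> U \<longleftrightarrow> y \<in> U)"
proof (induction rule: generate_topology_on.induct)
  case Empty then show ?case by simp
next
  case (Int a b) then show ?case by blast
next
  case (UN K) then show ?case by blast
next
  case (Basis s) then show ?case by blast
qed

lemma sep_lt: assumes T: "is_Btop T" and p: "isproj p"
  shows "(\<exists>V. openin (lt T p) V \<and> \<not> (x \<in> V \<longleftrightarrow> y \<in> V)) \<longleftrightarrow> \<not> (sp T p x y \<and> sp T p y x)"
proof
  assume "\<exists>V. openin (lt T p) V \<and> \<not> (x \<in> V \<longleftrightarrow> y \<in> V)"
  then obtain V where V: "openin (lt T p) V" "\<not> (x \<in> V \<longleftrightarrow> y \<in> V)" by blast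
  then obtain l where l: "l \<in> T" "V = {x. p (l x)}" unfolding openin_lt[OF T p] by blast
  have "\<not> (p (l x) \<longleftrightarrow> p (l y))" using V(2) l(2) by simp
  then show "\<not> (sp T p x y \<and> sp T p y x)" using l(1) unfolding sp_def by blast
next
  assume "\<not> (sp T p x y \<and> sp T p y x)"
  then obtain l where l: "l \<in> T" "\<not> (p (l x) \<longleftrightarrow> p (l y))" unfolding sp_def by blast
  have "openin (lt T p) {x. p (l x)}" unfolding openin_lt[OF T p] using l(1) by blast
  moreover have "\<not> (x \<in> {x. p (l x)} \<longleftrightarrow> y \<in> {x. p (l x)})" using l(2) by simp
  ultimately show "\<exists>V. openin (lt T p) V \<and> \<not> (x \<in> V \<longleftrightarrow> y \<in> V)" by blast
qed

lemma t0_char: assumes T: "is_Btop T"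
  shows "t0_space (join_top (lt T fst) (lt T snd)) \<longleftrightarrow>
    (\<forall>x y. x \<noteq> y \<longrightarrow> \<not> (sp T fst x y \<and> sp T fst y x \<and> sp T snd x y \<and> sp T snd y x))"
proof -
  define S where "S = {U. openin (lt T fst) U} \<union> {U. openin (lt T snd) U}"
  have J: "join_top (lt T fst) (lt T snd) = topology_generated_by S" unfolding join_top_def S_def ..
  have "openin (lt T fst) (topspace (lt T fst))" by (rule openin_topspace)
  then have "UNIV \<in> S" unfolding S_def topspace_lt[OF T isproj_fst] by blast
  then have ts: "topspace (topology_generated_by S) = UNIV" by auto
  have key: "(\<exists>U. openin (topology_generated_by S) U \<and> (x \<notin> U \<longleftrightarrow> y \<in> U)) \<longleftrightarrow>
     \<not> (sp T fst x y \<and> sp T fst y x \<and> sp T snd x y \<and> sp T snd y x)" for x y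
  proof -
    have "(\<exists>U. openin (topology_generated_by S) U \<and> (x \<notin> U \<longleftrightarrow> y \<in> U)) \<longleftrightarrow>
          (\<exists>V\<in>S. \<not> (x \<in> V \<longleftrightarrow> y \<in> V))"
    proof
      assume "\<exists>U. openin (topology_generated_by S) U \<and> (x \<notin> U \<longleftrightarrow> y \<in> U)"
      then obtain U where U: "generate_topology_on S U" "x \<notin> U \<longleftrightarrow> y \<in> U"
        unfolding openin_topology_generated_by_iff by blast
      show "\<exists>V\<in>S. \<not> (x \<in> V \<longleftrightarrow> y \<in> V)"
      proof (rule ccontr)
        assume "\<not> (\<exists>V\<in>S. \<not> (x \<in> V \<longleftrightarrow> y \<in> V))"
        then have "\<forall>V\<in>S. x \<in> V \<longleftrightarrow> y \<in> V" by blast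
        then have "x \<in> U \<longleftrightarrow> y \<in> U" by (rule gen_sep[OF U(1)])
        then show False using U(2) by blast
      qed
    next
      assume "\<exists>V\<in>S. \<not> (x \<in> V \<longleftrightarrow> y \<in> V)"
      then obtain V where V: "V \<in> S" "\<not> (x \<in> V \<longleftrightarrow> y \<in> V)" by blast
      have "openin (topology_generated_by S) V"
        unfolding openin_topology_generated_by_iff by (rule generate_topology_on.Basis[OF V(1)])
      then show "\<exists>U. openin (topology_generated_by S) U \<and> (x \<notin> U \<longleftrightarrow> y \<in> U)" using V(2) by blast
    qed
    also have "\<dots> \<longleftrightarrow> (\<exists>V. openin (lt T fst) V \<and> \<not> (x \<in> V \<longleftrightarrow> y \<in> V)) \<or>
                      (\<exists>V. openin (lt T snd) V \<and> \<not> (x \<in> V \<longleftrightarrow> y \<in> V))"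
      unfolding S_def by blast
    also have "\<dots> \<longleftrightarrow> \<not> (sp T fst x y \<and> sp T fst y x \<and> sp T snd x y \<and> sp T snd y x)"
      unfolding sep_lt[OF T isproj_fst] sep_lt[OF T isproj_snd] by blast
    finally show ?thesis .
  qed
  show ?thesis unfolding J t0_space_def ts using key by blast
qed

theorem mainTheorem15:
  fixes T :: "('a \<Rightarrow> B4) set"
  assumes "is_Btop T"
  shows "(B_R1 T \<longleftrightarrow> R1_space (level_top T tt) \<and> R1_space (level_top T ff))
    \<and> (B_Hausdorff T \<longleftrightarrow> R1_space (level_top T tt) \<and> R1_space (level_top T ff)
          \<and> t0_space (join_top (level_top T tt) (level_top T ff)))"
proof -
  have r: "B_R1 T \<longleftrightarrow> R1_space (lt T fst) \<and> R1_space (lt T snd)" by (rule R1_char[OF assms])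
  have t: "B_T0 T \<longleftrightarrow> t0_space (join_top (lt T fst) (lt T snd))"
    unfolding T0_char[OF assms] t0_char[OF assms] by blast
  show ?thesis unfolding level_tt level_ff B_Hausdorff_def using r t by blast
qed

end
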